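(* Let $B$ be a real-valued standard Brownian motion with $B_0=0$. Let $n\ge1$, and let $a,r>0$ with $a\ge2^{n-1}$ and $a+r\le2^n$; set $Q(a,r)=[a,a+r)$. For $0\le\gamma<\tfrac12$, let $$\mathcal A(n,a,r,\gamma)=\{\exists\,t\in Q(a,r): |B_t|\le t^\gamma\}.$$ Then $$\mathbb P\big(\mathcal A(n,a,r,\gamma)\big)\le\frac{2}{\sqrt\pi}\,2^{n(\gamma-1/2)}+\frac{4}{\sqrt{2\pi}}\Big(\frac ra\Big)^{1/2}.$$ *)

theory Defs
  imports "HOL-Probability.Probability"
begin

definition standard_brownian_motion :: "'a measure \<Rightarrow> (real \<Rightarrow> 'a \<Rightarrow> real) \<Rightarrow> bool" where
  "standard_brownian_motion M B \<longleftrightarrow>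
     prob_space M \<and>
     (\<forall>t\<ge>0. B t \<in> borel_measurable M) \<and>
     (\<forall>\<omega>\<in>space M. B 0 \<omega> = 0) \<and>
     (\<forall>\<omega>\<in>space M. continuous_on {0..} (\<lambda>t. B t \<omega>)) \<and>
     (\<forall>s t. 0 \<le> s \<and> s < t \<longrightarrow>
        distributed M lborel (\<lambda>\<omega>. B t \<omega> - B s \<omega>) (normal_density 0 (sqrt (t - s)))) \<and>
     (\<forall>(ts :: nat \<Rightarrow> real) k. 0 \<le> ts 0 \<and> (\<forall>i<k. ts i < ts (Suc i)) \<longrightarrow>
        prob_space.indep_vars M (\<lambda>_. borel) (\<lambda>i \<omega>. B (ts (Suc i)) \<omega> - B (ts i) \<omega>) {..<k})"

end

theory Submission
  imports Defs
begin

lemma (in prob_space) integrable_mult_sq: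
  fixes f g :: "'a \<Rightarrow> real"
  assumes "integrable M (\<lambda>x. (f x)^2)" "integrable M (\<lambda>x. (g x)^2)"
    "f \<in> borel_measurable M" "g \<in> borel_measurable M"
  shows "integrable M (\<lambda>x. f x * g x)"
proof (rule Bochner_Integration.integrable_bound[where f="\<lambda>x. (f x)^2 + (g x)^2"])
  show "integrable M (\<lambda>x. (f x)^2 + (g x)^2)" using assms by auto
  show "(\<lambda>x. f x * g x) \<in> borel_measurable M" using assms by auto
  show "AE x in M. norm (f x * g x) \<le> norm ((f x)^2 + (g x)^2)"
  proof (intro AE_I2)
    fix x
    have "0 \<le> (\<bar>f x\<bar> - \<bar>g x\<bar>)^2" by simp
    then have "2 * (\<bar>f x\<bar> * \<bar>g x\<bar>) \<le> (f x)^2 + (g x)^2"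
      by (simp add: power2_diff)
    moreover have "0 \<le> \<bar>f x\<bar> * \<bar>g x\<bar>" by simp
    ultimately have "\<bar>f x\<bar> * \<bar>g x\<bar> \<le> (f x)^2 + (g x)^2" by linarith
    then show "norm (f x * g x) \<le> norm ((f x)^2 + (g x)^2)"
      by (simp add: abs_mult)
  qed
qed

lemma (in prob_space) integrable_sq_sum:
  fixes Y :: "nat \<Rightarrow> 'a \<Rightarrow> real"
  assumes "finite I" "\<And>i. i \<in> I \<Longrightarrow> integrable M (\<lambda>x. (Y i x)^2)"
    "\<And>i. i \<in> I \<Longrightarrow> Y i \<in> borel_measurable M"
  shows "integrable M (\<lambda>x. (\<Sum>i\<in>I. Y i x)^2)"
proof -
  have "(\<lambda>x. (\<Sum>i\<in>I. Y i x)^2) = (\<lambda>x. \<Sum>i\<in>I. \<Sum>j\<in>I. Y i x * Y j x)"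
    by (simp add: power2_eq_square sum_product)
  moreover have "integrable M (\<lambda>x. \<Sum>i\<in>I. \<Sum>j\<in>I. Y i x * Y j x)"
    using assms by (intro Bochner_Integration.integrable_sum integrable_mult_sq) auto
  ultimately show ?thesis by simp
qed

lemma (in prob_space) integrable_of_sq:
  fixes f :: "'a \<Rightarrow> real"
  assumes "integrable M (\<lambda>x. (f x)^2)" "f \<in> borel_measurable M"
  shows "integrable M f"
  using integrable_mult_sq[OF assms(1) _ assms(2), of "\<lambda>_. 1"] by simp

lemma (in prob_space) kolmogorov_max:
  fixes Y :: "nat \<Rightarrow> 'a \<Rightarrow> real" and N :: nat and z :: real
  assumes ind: "indep_vars (\<lambda>_. borel) Y {1..N}"
    and rv[measurable]: "\<And>i. Y i \<in> borel_measurable M"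
    and sq: "\<And>i. i \<in> {1..N} \<Longrightarrow> integrable M (\<lambda>\<omega>. (Y i \<omega>)^2)"
    and mean: "\<And>i. i \<in> {1..N} \<Longrightarrow> expectation (Y i) = 0"
    and z: "z > 0"
  shows "prob {\<omega>\<in>space M. \<exists>k\<le>N. z \<le> \<bar>\<Sum>i=1..k. Y i \<omega>\<bar>}
           \<le> (\<Sum>i=1..N. expectation (\<lambda>\<omega>. (Y i \<omega>)^2)) / z^2"
proof -
  have intY: "\<And>i. i\<in>{1..N} \<Longrightarrow> integrable M (Y i)"
    using integrable_of_sq[OF sq rv] by blast
  define S where "S k \<omega> = (\<Sum>i=1..k. Y i \<omega>)" for k \<omega>
  have Smeas[measurable]: "\<And>k. S k \<in> borel_measurable M" unfolding S_def by measurable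
  have Ssq: "\<And>k. k \<le> N \<Longrightarrow> integrable M (\<lambda>\<omega>. (S k \<omega>)^2)"
    unfolding S_def by (intro integrable_sq_sum) (use sq in auto)
  have Sint: "\<And>k. k \<le> N \<Longrightarrow> integrable M (S k)"
    using integrable_of_sq[OF Ssq Smeas] by blast
  define P where "P k \<omega> \<longleftrightarrow> z \<le> \<bar>S k \<omega>\<bar> \<and> (\<forall>j<k. \<bar>S j \<omega>\<bar> < z)" for k \<omega>
  have Pmeas[measurable]: "\<And>k. Measurable.pred M (P k)" unfolding P_def by measurable
  define g where "g k \<omega> = (if P k \<omega> then 1 else (0::real))" for k \<omega>
  have gmeas[measurable]: "\<And>k. g k \<in> borel_measurable M" unfolding g_def by measurable
  define A where "A k = {\<omega>\<in>space M. P k \<omega>}" for k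
  have Aev: "\<And>k. A k \<in> events" unfolding A_def by measurable
  have probA: "prob (A k) = expectation (g k)" for k
  proof -
    have "prob (A k) = expectation (indicator (A k))" using Aev by simp
    also have "\<dots> = expectation (g k)"
      by (intro Bochner_Integration.integral_cong) (auto simp: A_def g_def indicator_def)
    finally show ?thesis .
  qed
  have gint: "integrable M (g k)" for k
    by (rule Bochner_Integration.integrable_bound[where f="\<lambda>_. 1::real"]) (auto simp: g_def)
  have cover: "{\<omega>\<in>space M. \<exists>k\<le>N. z \<le> \<bar>\<Sum>i=1..k. Y i \<omega>\<bar>} \<subseteq> (\<Union>k\<in>{..N}. A k)"
  proof
    fix \<omega> assume "\<omega> \<in> {\<omega>\<in>space M. \<exists>k\<le>N. z \<le> \<bar>\<Sum>i=1..k. Y i \<omega>\<bar>}"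
    then have om: "\<omega> \<in> space M" and "\<exists>k. z \<le> \<bar>S k \<omega>\<bar> \<and> k \<le> N" by (auto simp: S_def)
    then obtain k where k: "z \<le> \<bar>S k \<omega>\<bar> \<and> k \<le> N" "\<forall>j<k. \<not> (z \<le> \<bar>S j \<omega>\<bar> \<and> j \<le> N)"
      using exists_least_iff[of "\<lambda>k. z \<le> \<bar>S k \<omega>\<bar> \<and> k \<le> N"] by blast
    then have "P k \<omega>" unfolding P_def by auto
    then show "\<omega> \<in> (\<Union>k\<in>{..N}. A k)" using k om by (auto simp: A_def)
  qed
  have key: "z^2 * prob (A k) \<le> expectation (\<lambda>\<omega>. (S N \<omega>)^2 * g k \<omega>)" if kN: "k \<le> N" for k
  proof -
    define f where "f \<omega> = (if P k \<omega> then S k \<omega> else 0)" for \<omega>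
    define R where "R \<omega> = (\<Sum>i\<in>{Suc k..N}. Y i \<omega>)" for \<omega>
    have fmeas[measurable]: "f \<in> borel_measurable M" unfolding f_def by measurable
    have Rmeas[measurable]: "R \<in> borel_measurable M" unfolding R_def by measurable
    have split: "S N \<omega> = S k \<omega> + R \<omega>" for \<omega>
    proof -
      have "{1..N} = {1..k} \<union> {Suc k..N}" using kN by auto
      then show ?thesis unfolding S_def R_def by (simp add: sum.union_disjoint ivl_disj_int)
    qed
    have ident: "(S N \<omega>)^2 * g k \<omega> = (S k \<omega>)^2 * g k \<omega> + 2 * (f \<omega> * R \<omega>) + (R \<omega>)^2 * g k \<omega>" for \<omega>
      by (simp add: split g_def f_def power2_eq_square algebra_simps)
    have Rsq: "integrable M (\<lambda>\<omega>. (R \<omega>)^2)"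
      unfolding R_def by (intro integrable_sq_sum) (use sq in auto)
    have Rint: "integrable M R" using integrable_of_sq[OF Rsq Rmeas] .
    have ER: "expectation R = 0"
      unfolding R_def using intY mean by (subst Bochner_Integration.integral_sum) auto
    have fint: "integrable M f"
      by (rule Bochner_Integration.integrable_bound[OF Sint[OF kN]]) (auto simp: f_def)
    define g1 where "g1 v = (if z \<le> \<bar>\<Sum>i\<in>{1..k}. v i\<bar> \<and>
         (\<forall>j<k. \<bar>\<Sum>i\<in>{1..k}. if i \<le> j then v i else 0\<bar> < z) then (\<Sum>i\<in>{1..k}. v i) else (0::real))" for v :: "nat \<Rightarrow> real"
    define g2 where "g2 v = (\<Sum>i\<in>{Suc k..N}. v i)" for v :: "nat \<Rightarrow> real"
    have g1m: "g1 \<in> borel_measurable (PiM {1..k} (\<lambda>_. borel))" unfolding g1_def by measurable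
    have g2m: "g2 \<in> borel_measurable (PiM {Suc k..N} (\<lambda>_. borel))" unfolding g2_def by measurable
    have iv: "indep_var (PiM {1..k} (\<lambda>_. borel)) (\<lambda>\<omega>. restrict (\<lambda>i. Y i \<omega>) {1..k})
                        (PiM {Suc k..N} (\<lambda>_. borel)) (\<lambda>\<omega>. restrict (\<lambda>i. Y i \<omega>) {Suc k..N})"
      by (rule indep_var_restrict[OF ind]) (use kN in auto)
    have iv2: "indep_var borel (g1 \<circ> (\<lambda>\<omega>. restrict (\<lambda>i. Y i \<omega>) {1..k})) borel (g2 \<circ> (\<lambda>\<omega>. restrict (\<lambda>i. Y i \<omega>) {Suc k..N}))"
      by (rule indep_var_compose[OF iv g1m g2m])
    have e1: "g1 \<circ> (\<lambda>\<omega>. restrict (\<lambda>i. Y i \<omega>) {1..k}) = f"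
    proof
      fix \<omega>
      have *: "(\<Sum>i\<in>{1..k}. if i \<le> j then Y i \<omega> else 0) = S j \<omega>" if "j < k" for j
      proof -
        have "(\<Sum>i\<in>{1..k}. if i \<le> j then Y i \<omega> else 0) = (\<Sum>i\<in>{i\<in>{1..k}. i \<le> j}. Y i \<omega>)"
          using sum.inter_filter[of "{1..k}" "\<lambda>i. Y i \<omega>" "\<lambda>i. i \<le> j", symmetric] by simp
        also have "{i\<in>{1..k}. i \<le> j} = {1..j}" using that by auto
        finally show ?thesis by (simp add: S_def)
      qed
      have **: "(\<Sum>i\<in>{1..k}. if i \<le> j then restrict (\<lambda>i. Y i \<omega>) {1..k} i else 0)
               = (\<Sum>i\<in>{1..k}. if i \<le> j then Y i \<omega> else 0)" for j
        by (intro sum.cong) auto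
      show "(g1 \<circ> (\<lambda>\<omega>. restrict (\<lambda>i. Y i \<omega>) {1..k})) \<omega> = f \<omega>"
        unfolding g1_def f_def P_def comp_def ** using *
        by (simp add: S_def cong: conj_cong)
    qed
    have e2: "g2 \<circ> (\<lambda>\<omega>. restrict (\<lambda>i. Y i \<omega>) {Suc k..N}) = R"
      by (auto simp: g2_def R_def fun_eq_iff)
    have ivfR: "indep_var borel f borel R" using iv2 unfolding e1 e2 .
    have EfR: "expectation (\<lambda>\<omega>. f \<omega> * R \<omega>) = 0"
      using indep_var_lebesgue_integral[OF ivfR fint Rint] ER by simp
    have fRint: "integrable M (\<lambda>\<omega>. f \<omega> * R \<omega>)"
      using indep_var_integrable[OF ivfR fint Rint] .
    have i1: "integrable M (\<lambda>\<omega>. (S k \<omega>)^2 * g k \<omega>)"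
      by (rule Bochner_Integration.integrable_bound[OF Ssq[OF kN]]) (auto simp: g_def)
    have i3: "integrable M (\<lambda>\<omega>. (R \<omega>)^2 * g k \<omega>)"
      by (rule Bochner_Integration.integrable_bound[OF Rsq]) (auto simp: g_def)
    have "expectation (\<lambda>\<omega>. (S N \<omega>)^2 * g k \<omega>)
        = expectation (\<lambda>\<omega>. (S k \<omega>)^2 * g k \<omega>) + 2 * expectation (\<lambda>\<omega>. f \<omega> * R \<omega>)
          + expectation (\<lambda>\<omega>. (R \<omega>)^2 * g k \<omega>)"
      unfolding ident using i1 i3 fRint by simp
    also have "\<dots> \<ge> expectation (\<lambda>\<omega>. (S k \<omega>)^2 * g k \<omega>)"
      using EfR by (simp add: g_def)
    also have "expectation (\<lambda>\<omega>. (S k \<omega>)^2 * g k \<omega>) \<ge> expectation (\<lambda>\<omega>. z^2 * g k \<omega>)"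
    proof (rule integral_mono[OF _ i1])
      show "integrable M (\<lambda>\<omega>. z^2 * g k \<omega>)" using gint by simp
      fix \<omega>
      show "z^2 * g k \<omega> \<le> (S k \<omega>)^2 * g k \<omega>"
      proof (cases "P k \<omega>")
        case True
        then have "z \<le> \<bar>S k \<omega>\<bar>" by (simp add: P_def)
        then have "z^2 \<le> \<bar>S k \<omega>\<bar>^2" using z by (intro power_mono) auto
        then show ?thesis using True by (simp add: g_def)
      qed (simp add: g_def)
    qed
    also have "expectation (\<lambda>\<omega>. z^2 * g k \<omega>) = z^2 * prob (A k)"
      by (simp add: probA)
    finally show ?thesis .
  qed
  have uniq: "k = l" if "P k \<omega>" "P l \<omega>" for k l \<omega>
  proof (rule linorder_cases[of k l])
    assume "k < l" then show ?thesis using that unfolding P_def by force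
  next
    assume "l < k" then show ?thesis using that unfolding P_def by force
  qed
  have gsum: "(\<Sum>k\<in>{..N}. g k \<omega>) \<le> 1" for \<omega>
  proof (cases "\<exists>k\<in>{..N}. P k \<omega>")
    case True
    then obtain k where k: "k \<in> {..N}" "P k \<omega>" by blast
    have "(\<Sum>k\<in>{..N}. g k \<omega>) = g k \<omega> + (\<Sum>l\<in>{..N} - {k}. g l \<omega>)"
      using k by (simp add: sum.remove)
    also have "(\<Sum>l\<in>{..N} - {k}. g l \<omega>) = 0"
      using uniq[OF k(2)] by (intro sum.neutral) (auto simp: g_def)
    finally show ?thesis by (simp add: g_def)
  next
    case False
    then show ?thesis by (simp add: g_def)
  qed
  have gnn: "0 \<le> g k \<omega>" for k \<omega> by (simp add: g_def)
  have SNsq: "integrable M (\<lambda>\<omega>. (S N \<omega>)^2)" using Ssq by simp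
  have ES: "expectation (\<lambda>\<omega>. (S N \<omega>)^2) = (\<Sum>i=1..N. expectation (\<lambda>\<omega>. (Y i \<omega>)^2))"
  proof -
    have cross: "expectation (\<lambda>\<omega>. Y i \<omega> * Y j \<omega>) = (if i = j then expectation (\<lambda>\<omega>. (Y i \<omega>)^2) else 0)"
      if ij0: "i\<in>{1..N}" "j\<in>{1..N}" for i j
    proof cases
      assume "i = j" thus ?thesis by (simp add: power2_eq_square)
    next
      assume ij: "i \<noteq> j"
      have "indep_vars (\<lambda>_. borel) Y {i,j}" using indep_vars_subset[OF ind] ij0 by auto
      then have "expectation (\<lambda>\<omega>. \<Prod>l\<in>{i,j}. Y l \<omega>) = (\<Prod>l\<in>{i,j}. expectation (Y l))"
        by (intro indep_vars_lebesgue_integral) (use intY ij0 in auto)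
      then show ?thesis using ij mean ij0 by simp
    qed
    have inner: "expectation (\<lambda>\<omega>. \<Sum>j\<in>{1..N}. Y i \<omega> * Y j \<omega>) = (\<Sum>j\<in>{1..N}. expectation (\<lambda>\<omega>. Y i \<omega> * Y j \<omega>))"
      if "i \<in> {1..N}" for i
      by (intro Bochner_Integration.integral_sum integrable_mult_sq sq rv that) 
    have "expectation (\<lambda>\<omega>. (S N \<omega>)^2) = expectation (\<lambda>\<omega>. \<Sum>i\<in>{1..N}. \<Sum>j\<in>{1..N}. Y i \<omega> * Y j \<omega>)"
      by (simp add: S_def power2_eq_square sum_product)
    also have "\<dots> = (\<Sum>i\<in>{1..N}. expectation (\<lambda>\<omega>. \<Sum>j\<in>{1..N}. Y i \<omega> * Y j \<omega>))"
      by (intro Bochner_Integration.integral_sum Bochner_Integration.integrable_sum integrable_mult_sq sq rv) auto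
    also have "\<dots> = (\<Sum>i\<in>{1..N}. \<Sum>j\<in>{1..N}. (if i = j then expectation (\<lambda>\<omega>. (Y i \<omega>)^2) else 0))"
    proof (intro sum.cong refl)
      fix i assume i: "i \<in> {1..N}"
      show "expectation (\<lambda>\<omega>. \<Sum>j\<in>{1..N}. Y i \<omega> * Y j \<omega>) = (\<Sum>j\<in>{1..N}. (if i = j then expectation (\<lambda>\<omega>. (Y i \<omega>)^2) else 0))"
        unfolding inner[OF i] by (intro sum.cong refl cross[OF i])
    qed
    also have "\<dots> = (\<Sum>i=1..N. expectation (\<lambda>\<omega>. (Y i \<omega>)^2))"
      by simp
    finally show ?thesis .
  qed
  have "prob {\<omega>\<in>space M. \<exists>k\<le>N. z \<le> \<bar>\<Sum>i=1..k. Y i \<omega>\<bar>} \<le> prob (\<Union>k\<in>{..N}. A k)"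
    by (rule finite_measure_mono[OF cover]) (use Aev in auto)
  also have "\<dots> \<le> (\<Sum>k\<in>{..N}. prob (A k))"
    by (rule finite_measure_subadditive_finite) (use Aev in auto)
  finally have "z^2 * prob {\<omega>\<in>space M. \<exists>k\<le>N. z \<le> \<bar>\<Sum>i=1..k. Y i \<omega>\<bar>} \<le> z^2 * (\<Sum>k\<in>{..N}. prob (A k))"
    by (rule mult_left_mono) simp
  also have "\<dots> = (\<Sum>k\<in>{..N}. z^2 * prob (A k))" by (simp add: sum_distrib_left)
  also have "\<dots> \<le> (\<Sum>k\<in>{..N}. expectation (\<lambda>\<omega>. (S N \<omega>)^2 * g k \<omega>))"
    by (intro sum_mono key) auto
  also have "\<dots> = expectation (\<lambda>\<omega>. \<Sum>k\<in>{..N}. (S N \<omega>)^2 * g k \<omega>)"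
    by (rule Bochner_Integration.integral_sum[symmetric])
       (intro Bochner_Integration.integrable_bound[OF SNsq]; auto simp: g_def)
  also have "\<dots> \<le> expectation (\<lambda>\<omega>. (S N \<omega>)^2)"
  proof (rule integral_mono[OF _ SNsq])
    show "integrable M (\<lambda>\<omega>. \<Sum>k\<in>{..N}. (S N \<omega>)^2 * g k \<omega>)"
      by (intro Bochner_Integration.integrable_sum Bochner_Integration.integrable_bound[OF SNsq]) (auto simp: g_def)
    fix \<omega>
    have "(\<Sum>k\<in>{..N}. (S N \<omega>)^2 * g k \<omega>) = (S N \<omega>)^2 * (\<Sum>k\<in>{..N}. g k \<omega>)"
      by (simp add: sum_distrib_left)
    also have "\<dots> \<le> (S N \<omega>)^2 * 1" by (rule mult_left_mono[OF gsum]) simp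
    finally show "(\<Sum>k\<in>{..N}. (S N \<omega>)^2 * g k \<omega>) \<le> (S N \<omega>)^2" by simp
  qed
  also have "\<dots> = (\<Sum>i=1..N. expectation (\<lambda>\<omega>. (Y i \<omega>)^2))" by (rule ES)
  finally show ?thesis using z by (simp add: pos_le_divide_eq mult.commute)
qed

lemma tail_integral:
  fixes c r :: real
  assumes c: "c \<ge> 0" and r: "r > 0"
  shows "(\<integral>\<^sup>+x. ennreal (r / (x - c)^2) * indicator {c + sqrt r ..} x \<partial>lborel) = ennreal (sqrt r)"
proof -
  have sr: "sqrt r > 0" using r by simp
  have "(\<integral>\<^sup>+x. ennreal (r / (x - c)^2) * indicator {c + sqrt r ..} x \<partial>lborel)
        = ennreal (0 - (- r / ((c + sqrt r) - c)))"
  proof (rule nn_integral_FTC_atLeast)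
    show "(\<lambda>x. r / (x - c)^2) \<in> borel_measurable borel" by measurable
    fix x assume x: "c + sqrt r \<le> x"
    then have "x - c \<noteq> 0" using sr by auto
    then show "((\<lambda>x. - r / (x - c)) has_real_derivative r / (x - c)^2) (at x)"
      by (auto intro!: derivative_eq_intros simp: power2_eq_square field_simps)
    show "0 \<le> r / (x - c)^2" using r by simp
  next
    have "filterlim (\<lambda>x::real. x - c) at_top at_top"
      using filterlim_tendsto_add_at_top[OF tendsto_const filterlim_ident, of "-c"]
      by (simp add: algebra_simps)
    then have "filterlim (\<lambda>x::real. x - c) at_infinity at_top"
      by (rule filterlim_at_top_imp_at_infinity)
    then have "((\<lambda>x. - r / (x - c)) \<longlongrightarrow> 0) at_top"
      by (intro tendsto_divide_0[OF tendsto_const])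
    then show "((\<lambda>x. - r / (x - c)) \<longlongrightarrow> 0) at_top" .
  qed
  also have "0 - (- r / ((c + sqrt r) - c)) = sqrt r"
    using r by (simp add: real_div_sqrt)
  finally show ?thesis .
qed

lemma h_integral:
  fixes c r :: real
  assumes c: "c \<ge> 0" and r: "r > 0"
  shows "(\<integral>\<^sup>+x. ennreal (if \<bar>x\<bar> < c + sqrt r then 1 else r / (\<bar>x\<bar> - c)^2) \<partial>lborel)
         = ennreal (2 * c + 4 * sqrt r)"
proof -
  define b where "b = c + sqrt r"
  have sr: "sqrt r > 0" using r by simp
  have b: "b > 0" unfolding b_def using sr c by linarith
  define t where "t x = ennreal (r / (x - c)^2) * indicator {b ..} x" for x
  have tm[measurable]: "t \<in> borel_measurable borel" unfolding t_def by measurable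
  have pw: "ennreal (if \<bar>x\<bar> < c + sqrt r then 1 else r / (\<bar>x\<bar> - c)^2)
        = indicator {-b<..<b} x + t x + t (-x)" for x
  proof -
    consider "\<bar>x\<bar> < b" | "x \<ge> b" | "x \<le> - b" by linarith
    then show ?thesis
    proof cases
      case 1 then show ?thesis by (auto simp: t_def b_def indicator_def)
    next
      case 2 then show ?thesis using b by (auto simp: t_def b_def indicator_def)
    next
      case 3
      then have "\<bar>x\<bar> = - x" using b by linarith
      then have "(\<bar>x\<bar> - c)^2 = (- x - c)^2" by simp
      then show ?thesis using 3 b by (auto simp: t_def b_def indicator_def)
    qed
  qed
  have T: "(\<integral>\<^sup>+x. t x \<partial>lborel) = ennreal (sqrt r)"
    unfolding t_def b_def by (rule tail_integral[OF c r])
  have T': "(\<integral>\<^sup>+x. t (-x) \<partial>lborel) = ennreal (sqrt r)"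
    using nn_integral_real_affine[OF tm, of "-1" 0] T by simp
  have e1: "ennreal (2*b + sqrt r) = ennreal (2*b) + ennreal (sqrt r)" by (rule ennreal_plus) (use b sr in auto)
  have e2: "ennreal (2*b + sqrt r + sqrt r) = ennreal (2*b + sqrt r) + ennreal (sqrt r)" by (rule ennreal_plus) (use b sr in auto)
  have "(\<integral>\<^sup>+x. ennreal (if \<bar>x\<bar> < c + sqrt r then 1 else r / (\<bar>x\<bar> - c)^2) \<partial>lborel)
       = (\<integral>\<^sup>+x. indicator {-b<..<b} x + t x + t (-x) \<partial>lborel)"
    by (simp add: pw)
  also have "\<dots> = (\<integral>\<^sup>+x. indicator {-b<..<b} x \<partial>lborel) + (\<integral>\<^sup>+x. t x \<partial>lborel) + (\<integral>\<^sup>+x. t (-x) \<partial>lborel)"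
    by (subst nn_integral_add; simp)+
  also have "\<dots> = ennreal (2*b) + ennreal (sqrt r) + ennreal (sqrt r)"
    using b by (simp add: T T')
  also have "\<dots> = ennreal (2*b + sqrt r + sqrt r)"
    unfolding e2 e1 by (rule refl)
  also have "2*b + sqrt r + sqrt r = 2 * c + 4 * sqrt r" by (simp add: b_def)
  finally show ?thesis .
qed

lemma (in prob_space) core:
  fixes Z :: "nat \<Rightarrow> 'a \<Rightarrow> real" and N :: nat and a c r :: real
  assumes ind: "indep_vars (\<lambda>_. borel) Z {..N}"
    and rv[measurable]: "\<And>i. Z i \<in> borel_measurable M"
    and X: "distributed M lborel (Z 0) (normal_density 0 (sqrt a))" and a: "a > 0"
    and sq: "\<And>i. i \<in> {1..N} \<Longrightarrow> integrable M (\<lambda>\<omega>. (Z i \<omega>)^2)"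
    and mean: "\<And>i. i \<in> {1..N} \<Longrightarrow> expectation (Z i) = 0"
    and var: "(\<Sum>i=1..N. expectation (\<lambda>\<omega>. (Z i \<omega>)^2)) \<le> r"
    and r: "r > 0" and c: "c \<ge> 0"
  shows "prob {\<omega>\<in>space M. \<exists>k\<le>N. \<bar>\<Sum>i\<le>k. Z i \<omega>\<bar> \<le> c} \<le> (2*c + 4* sqrt r) / sqrt (2*pi*a)"
proof -
  define V where "V \<omega> = restrict (\<lambda>i. Z i \<omega>) {1..N}" for \<omega>
  define PN where "PN = PiM {1..N} (\<lambda>_::nat. borel :: real measure)"
  have Vm[measurable]: "V \<in> measurable M PN" unfolding V_def PN_def by measurable
  define X0 where "X0 \<omega> = restrict (\<lambda>i. Z i \<omega>) {0}" for \<omega>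
  define PZ where "PZ = PiM {0::nat} (\<lambda>_::nat. borel :: real measure)"
  have X0m[measurable]: "X0 \<in> measurable M PZ" unfolding X0_def PZ_def by measurable
  have iv: "indep_var PZ X0 PN V"
    unfolding V_def PN_def X0_def PZ_def by (rule indep_var_restrict[OF ind]) auto
  interpret DV: prob_space "distr M PN V" by (rule prob_space_distr) simp
  have joint: "distr M (PZ \<Otimes>\<^sub>M PN) (\<lambda>\<omega>. (X0 \<omega>, V \<omega>)) = distr M PZ X0 \<Otimes>\<^sub>M distr M PN V"
    using iv by (simp add: indep_var_distribution_eq)
  define G where "G k v = (\<Sum>i\<in>{1..N}. if i \<le> k then v i else 0)" for k and v :: "nat \<Rightarrow> real"
  have Gm[measurable]: "\<And>k. G k \<in> borel_measurable PN" unfolding G_def PN_def by measurable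
  have GV: "G k (V \<omega>) = (\<Sum>i\<in>{1..k}. Z i \<omega>)" if "k \<le> N" for k \<omega>
  proof -
    have "G k (V \<omega>) = (\<Sum>i\<in>{1..N}. if i \<le> k then Z i \<omega> else 0)"
      unfolding G_def V_def by (intro sum.cong) auto
    also have "\<dots> = (\<Sum>i\<in>{i\<in>{1..N}. i \<le> k}. Z i \<omega>)"
      using sum.inter_filter[of "{1..N}" "\<lambda>i. Z i \<omega>" "\<lambda>i. i \<le> k"] by simp
    also have "{i\<in>{1..N}. i \<le> k} = {1..k}" using that by auto
    finally show ?thesis .
  qed
  define D where "D = {p \<in> space (PZ \<Otimes>\<^sub>M PN). \<exists>k\<le>N. \<bar>fst p 0 + G k (snd p)\<bar> \<le> c}"
  have Dm: "D \<in> sets (PZ \<Otimes>\<^sub>M PN)" unfolding D_def PZ_def by measurable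
  define E where "E = {\<omega>\<in>space M. \<exists>k\<le>N. \<bar>\<Sum>i\<le>k. Z i \<omega>\<bar> \<le> c}"
  have sumsplit: "(\<Sum>i\<le>k. Z i \<omega>) = Z 0 \<omega> + (\<Sum>i\<in>{1..k}. Z i \<omega>)" for k \<omega>
  proof -
    have "{..k} = insert 0 {1..k}" by auto
    then show ?thesis by simp
  qed
  have Eeq: "E = (\<lambda>\<omega>. (X0 \<omega>, V \<omega>)) -` D \<inter> space M"
  proof -
    have sp: "\<omega> \<in> space M \<Longrightarrow> (X0 \<omega>, V \<omega>) \<in> space (PZ \<Otimes>\<^sub>M PN)" for \<omega>
      using measurable_space[OF Vm] measurable_space[OF X0m] by (auto simp: space_pair_measure)
    show ?thesis unfolding E_def D_def using sp
      by (auto simp: sumsplit GV X0_def)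
  qed
  have EmD: "emeasure M E = emeasure (distr M PZ X0 \<Otimes>\<^sub>M distr M PN V) D"
    unfolding Eeq joint[symmetric] using Dm by (subst emeasure_distr) auto
  define h where "h x = (if \<bar>x\<bar> < c + sqrt r then 1 else r / (\<bar>x\<bar> - c)^2)" for x :: real
  have hm[measurable]: "h \<in> borel_measurable borel" unfolding h_def by measurable
  have slice: "emeasure (distr M PN V) (Pair u -` D) \<le> ennreal (h (u 0))" for u
  proof -
    define x where "x = u 0"
    define Ex where "Ex = {\<omega>\<in>space M. \<exists>k\<le>N. \<bar>x + (\<Sum>i\<in>{1..k}. Z i \<omega>)\<bar> \<le> c}"
    have Exm: "Ex \<in> events" unfolding Ex_def by measurable
    define S' where "S' = {v \<in> space PN. \<exists>k\<le>N. \<bar>x + G k v\<bar> \<le> c}"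
    have sl: "Pair u -` D \<subseteq> S'"
      unfolding D_def x_def S'_def by (auto simp: space_pair_measure)
    have slm: "S' \<in> sets PN" unfolding S'_def by measurable
    have pEx: "prob Ex \<le> h x"
    proof (cases "\<bar>x\<bar> < c + sqrt r")
      case True then show ?thesis by (simp add: h_def)
    next
      case False
      define z where "z = \<bar>x\<bar> - c"
      have sr: "sqrt r > 0" using r by simp
      have z: "z > 0" unfolding z_def using False sr by linarith
      have "Ex \<subseteq> {\<omega>\<in>space M. \<exists>k\<le>N. z \<le> \<bar>\<Sum>i=1..k. Z i \<omega>\<bar>}"
        unfolding Ex_def z_def by force
      then have "prob Ex \<le> prob {\<omega>\<in>space M. \<exists>k\<le>N. z \<le> \<bar>\<Sum>i=1..k. Z i \<omega>\<bar>}"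
        by (intro finite_measure_mono) measurable
      also have "\<dots> \<le> (\<Sum>i=1..N. expectation (\<lambda>\<omega>. (Z i \<omega>)^2)) / z^2"
        by (rule kolmogorov_max[OF indep_vars_subset[OF ind] rv sq mean z]) auto
      also have "\<dots> \<le> r / z^2" using var z by (intro divide_right_mono) auto
      also have "\<dots> = h x" using False by (simp add: h_def z_def)
      finally show ?thesis .
    qed
    have "emeasure (distr M PN V) (Pair u -` D) \<le> emeasure (distr M PN V) S'"
      by (rule emeasure_mono[OF sl]) (simp add: slm)
    also have "\<dots> = emeasure M (V -` S' \<inter> space M)"
      using slm by (simp add: emeasure_distr)
    also have "V -` S' \<inter> space M = Ex"
      unfolding S'_def Ex_def using measurable_space[OF Vm] by (auto simp: GV)
    also have "emeasure M Ex = ennreal (prob Ex)" by (simp add: emeasure_eq_measure)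
    also have "\<dots> \<le> ennreal (h (u 0))" using pEx by (simp add: x_def ennreal_leI)
    finally show ?thesis .
  qed
  define f0 where "f0 = 1 / sqrt (2*pi*a)"
  have f0: "normal_density 0 (sqrt a) x \<le> f0" for x
  proof -
    have "normal_density 0 (sqrt a) x = 1 / sqrt (2*pi*a) * exp (- (x\<^sup>2) / (2 * a))"
      using a by (simp add: normal_density_def)
    also have "\<dots> \<le> 1 / sqrt (2*pi*a) * 1"
      using a by (intro mult_left_mono) auto
    finally show ?thesis by (simp add: f0_def)
  qed
  have hnn: "0 \<le> h x" for x using r by (simp add: h_def)
  have "emeasure M E = (\<integral>\<^sup>+u. emeasure (distr M PN V) (Pair u -` D) \<partial>distr M PZ X0)"
    unfolding EmD by (rule DV.emeasure_pair_measure_alt) (use Dm in simp)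
  also have "\<dots> \<le> (\<integral>\<^sup>+u. ennreal (h (u 0)) \<partial>distr M PZ X0)"
    by (intro nn_integral_mono slice)
  also have "\<dots> = (\<integral>\<^sup>+\<omega>. ennreal (h (X0 \<omega> 0)) \<partial>M)"
    by (rule nn_integral_distr[OF X0m]) (simp add: PZ_def)
  also have "\<dots> = (\<integral>\<^sup>+\<omega>. ennreal (h (Z 0 \<omega>)) \<partial>M)"
    by (simp add: X0_def)
  also have "\<dots> = (\<integral>\<^sup>+x. ennreal (normal_density 0 (sqrt a) x) * ennreal (h x) \<partial>lborel)"
    by (rule distributed_nn_integral[OF X, symmetric]) simp
  also have "\<dots> \<le> (\<integral>\<^sup>+x. ennreal f0 * ennreal (h x) \<partial>lborel)"
    by (intro nn_integral_mono mult_right_mono ennreal_leI f0) simp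
  also have "\<dots> = ennreal f0 * (\<integral>\<^sup>+x. ennreal (h x) \<partial>lborel)"
    by (rule nn_integral_cmult) simp
  also have "(\<integral>\<^sup>+x. ennreal (h x) \<partial>lborel) = ennreal (2 * c + 4 * sqrt r)"
    unfolding h_def by (rule h_integral[OF c r])
  also have "ennreal f0 * ennreal (2 * c + 4 * sqrt r) = ennreal (f0 * (2 * c + 4 * sqrt r))"
    by (rule ennreal_mult[symmetric]) (use c r a in \<open>auto simp: f0_def\<close>)
  finally have "ennreal (prob E) \<le> ennreal (f0 * (2 * c + 4 * sqrt r))"
    by (simp add: emeasure_eq_measure)
  then have "prob E \<le> f0 * (2 * c + 4 * sqrt r)"
    using c r a by (subst (asm) ennreal_le_iff) (auto simp: f0_def)
  then show ?thesis by (simp add: E_def f0_def)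
qed

lemma final_arith:
  fixes n :: nat and a r \<gamma> :: real
  assumes n: "n \<ge> 1" and a: "a > 0" and r: "r > 0" and an: "a \<ge> 2 ^ (n - 1)"
  shows "(2 * 2 powr (real n * \<gamma>) + 4 * sqrt r) / sqrt (2 * pi * a)
         \<le> 2 / sqrt pi * 2 powr (real n * (\<gamma> - 1/2)) + 4 / sqrt (2 * pi) * (r / a) powr (1/2)"
proof -
  have pos: "0 < sqrt (2 * pi * 2 ^ (n - 1))" by simp
  have "2 * pi * 2 ^ (n - 1) = pi * 2 ^ n" using n by (cases n) auto
  have s1: "sqrt (2 * pi * 2 ^ (n - 1)) = sqrt pi * 2 powr (real n / 2)"
  proof -
    have "sqrt ((2::real) ^ n) = ((2::real) ^ n) powr (1/2)" by (simp add: powr_half_sqrt)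
    also have "\<dots> = (2 powr real n) powr (1/2)" by (simp add: powr_realpow)
    also have "\<dots> = 2 powr (real n / 2)" by (simp add: powr_powr)
    finally have "sqrt ((2::real) ^ n) = 2 powr (real n / 2)" .
    then show ?thesis unfolding \<open>2 * pi * 2 ^ (n - 1) = pi * 2 ^ n\<close> real_sqrt_mult by simp
  qed
  have A: "2 * 2 powr (real n * \<gamma>) / sqrt (2 * pi * a) \<le> 2 * 2 powr (real n * \<gamma>) / sqrt (2 * pi * 2 ^ (n - 1))"
    using an a by (intro divide_left_mono mult_pos_pos) auto
  also have "\<dots> = 2 / sqrt pi * 2 powr (real n * (\<gamma> - 1/2))"
  proof -
    have "real n * (\<gamma> - 1/2) = real n * \<gamma> - real n / 2" by (simp add: algebra_simps)
    then have p: "2 powr (real n * (\<gamma> - 1/2)) = 2 powr (real n * \<gamma>) / 2 powr (real n / 2)"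
      by (simp add: powr_diff)
    show ?thesis unfolding s1 p by simp
  qed
  finally have A': "2 * 2 powr (real n * \<gamma>) / sqrt (2 * pi * a) \<le> 2 / sqrt pi * 2 powr (real n * (\<gamma> - 1/2))" .
  have B: "4 * sqrt r / sqrt (2 * pi * a) = 4 / sqrt (2 * pi) * (r / a) powr (1/2)"
    using a r by (simp add: powr_half_sqrt real_sqrt_mult real_sqrt_divide)
  show ?thesis using A' B by (simp add: add_divide_distrib)
qed

theorem lemma3:
  fixes M :: "'a measure" and B :: "real \<Rightarrow> 'a \<Rightarrow> real"
    and n :: nat and a r \<gamma> :: real
  assumes "standard_brownian_motion M B"
    and "n \<ge> 1" and "a > 0" and "r > 0"
    and "a \<ge> 2 ^ (n - 1)" and "a + r \<le> 2 ^ n"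
    and "0 \<le> \<gamma>" and "\<gamma> < 1/2"
  shows "measure M {\<omega> \<in> space M. \<exists>t\<in>{a..<a+r}. \<bar>B t \<omega>\<bar> \<le> t powr \<gamma>}
           \<le> 2 / sqrt pi * 2 powr (real n * (\<gamma> - 1/2)) + 4 / sqrt (2 * pi) * (r / a) powr (1/2)"
proof -
  note bm = assms(1)[unfolded standard_brownian_motion_def]
  have n: "n \<ge> 1" and a: "a > 0" and r: "r > 0" and an: "a \<ge> 2 ^ (n - 1)" and arn: "a + r \<le> 2 ^ n"
    and g0: "0 \<le> \<gamma>" using assms by auto
  interpret prob_space M using bm by simp
  have Bm: "\<And>t. t \<ge> 0 \<Longrightarrow> B t \<in> borel_measurable M" using bm by simp
  have B0: "\<And>\<omega>. \<omega> \<in> space M \<Longrightarrow> B 0 \<omega> = 0" using bm by simp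
  have Bc: "\<And>\<omega>. \<omega> \<in> space M \<Longrightarrow> continuous_on {0..} (\<lambda>t. B t \<omega>)" using bm by simp
  have Bd: "\<And>s t. 0 \<le> s \<Longrightarrow> s < t \<Longrightarrow>
     distributed M lborel (\<lambda>\<omega>. B t \<omega> - B s \<omega>) (normal_density 0 (sqrt (t - s)))" using bm by simp
  have Bi: "\<And>ts k. 0 \<le> ts 0 \<Longrightarrow> (\<forall>i<k. ts i < ts (Suc i)) \<Longrightarrow>
     indep_vars (\<lambda>_. borel) (\<lambda>i \<omega>. B (ts (Suc i)) \<omega> - B (ts i) \<omega>) {..<k}"
    using bm by blast
  define c where "c = 2 powr (real n * \<gamma>)"
  have c0: "c \<ge> 0" by (simp add: c_def)
  define F where "F = {\<omega> \<in> space M. \<exists>t\<in>{a..<a+r}. \<bar>B t \<omega>\<bar> \<le> t powr \<gamma>}"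
  define s where "s m k = a + real k * r / 2^m" for m k :: nat
  have s_pos: "s m k > 0" for m k unfolding s_def using a r by (simp add: add_pos_nonneg)
  have Bs[measurable]: "B (s m k) \<in> borel_measurable M" for m k using Bm s_pos less_imp_le by blast
  define G where "G e m = {\<omega>\<in>space M. \<exists>k\<le>(2::nat)^m. \<bar>B (s m k) \<omega>\<bar> \<le> c + e}" for e m
  have Gm: "G e m \<in> events" for e m unfolding G_def by measurable
  have Gbound: "prob (G e m) \<le> (2 * (c + e) + 4 * sqrt r) / sqrt (2 * pi * a)" if e: "e > 0" for e m
  proof -
    define ts where "ts i = (if i = 0 then 0 else s m (i - 1))" for i
    define Z where "Z i \<omega> = B (ts (Suc i)) \<omega> - B (ts i) \<omega>" for i \<omega>
    have ts_nn: "ts i \<ge> 0" for i using s_pos[of m "i - 1"] by (simp add: ts_def)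
    have ts_mono: "ts i < ts (Suc i)" for i
      using a r by (cases i) (auto simp: ts_def s_def divide_strict_right_mono)
    have ind: "indep_vars (\<lambda>_. borel) Z {..2^m}"
      using Bi[of ts "Suc (2^m)"] ts_mono ts_nn unfolding Z_def lessThan_Suc_atMost by simp
    have rv: "\<And>i. Z i \<in> borel_measurable M" unfolding Z_def using Bm ts_nn by auto
    have X: "distributed M lborel (Z 0) (normal_density 0 (sqrt a))"
    proof -
      have "Z 0 = (\<lambda>\<omega>. B a \<omega> - B 0 \<omega>)" by (simp add: fun_eq_iff Z_def ts_def s_def)
      then show ?thesis using Bd[of 0 a] a by simp
    qed
    define \<sigma> where "\<sigma> = sqrt (r / 2^m)"
    have \<sigma>: "\<sigma> > 0" using r by (simp add: \<sigma>_def)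
    have Zi: "distributed M lborel (Z i) (normal_density 0 \<sigma>)" if i: "i \<in> {1..2^m}" for i
    proof -
      have "ts (Suc i) - ts i = r / 2^m" using i
        by (simp add: ts_def s_def field_simps of_nat_diff)
      moreover have "Z i = (\<lambda>\<omega>. B (ts (Suc i)) \<omega> - B (ts i) \<omega>)" by (simp add: fun_eq_iff Z_def)
      ultimately show ?thesis using Bd[of "ts i" "ts (Suc i)"] ts_nn ts_mono
        unfolding \<sigma>_def by simp
    qed
    have mean: "expectation (Z i) = 0" if i: "i \<in> {1..2^m}" for i
      using normal_distributed_expectation[OF \<sigma> Zi[OF i]] .
    have var: "expectation (\<lambda>\<omega>. (Z i \<omega>)^2) = r / 2^m" if i: "i \<in> {1..2^m}" for i
      using normal_distributed_variance[OF \<sigma> Zi[OF i]] mean[OF i] r by (simp add: \<sigma>_def)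
    have sq: "integrable M (\<lambda>\<omega>. (Z i \<omega>)^2)" if i: "i \<in> {1..2^m}" for i
    proof -
      have "integrable lborel (\<lambda>x. normal_density 0 \<sigma> x * x^2)"
        using integrable_normal_moment[OF \<sigma>, where k=2 and \<mu>=0] by simp
      then show ?thesis
        using distributed_integrable[OF Zi[OF i], of "\<lambda>x. x^2"] by simp
    qed
    have vsum: "(\<Sum>i=1..2^m. expectation (\<lambda>\<omega>. (Z i \<omega>)^2)) \<le> r"
      using var by simp
    have core': "prob {\<omega>\<in>space M. \<exists>k\<le>2^m. \<bar>\<Sum>i\<le>k. Z i \<omega>\<bar> \<le> c + e}
        \<le> (2 * (c + e) + 4 * sqrt r) / sqrt (2 * pi * a)"
      by (rule core[OF ind rv X a sq mean vsum r]) (use c0 e in auto)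
    have tel: "(\<Sum>i\<le>k. Z i \<omega>) = B (ts (Suc k)) \<omega> - B (ts 0) \<omega>" for k \<omega>
      by (induction k) (auto simp: Z_def)
    have "G e m = {\<omega>\<in>space M. \<exists>k\<le>2^m. \<bar>\<Sum>i\<le>k. Z i \<omega>\<bar> \<le> c + e}"
      unfolding G_def tel by (auto simp: ts_def B0)
    then show ?thesis using core' by simp
  qed
  have Ginc: "incseq (G e)" for e
  proof (rule incseq_SucI)
    fix m
    have ss: "s (Suc m) (2 * k) = s m k" for k by (simp add: s_def)
    show "G e m \<subseteq> G e (Suc m)"
    proof
      fix \<omega> assume "\<omega> \<in> G e m"
      then obtain k where k: "\<omega> \<in> space M" "k \<le> 2^m" "\<bar>B (s m k) \<omega>\<bar> \<le> c + e" by (auto simp: G_def)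
      then have "2 * k \<le> 2 ^ Suc m" by simp
      then have "\<omega> \<in> space M \<and> (\<exists>j\<le>2 ^ Suc m. \<bar>B (s (Suc m) j) \<omega>\<bar> \<le> c + e)"
        using k ss[of k] by (intro conjI exI[of _ "2 * k"]) auto
      then show "\<omega> \<in> G e (Suc m)" by (simp add: G_def)
    qed
  qed
  have cover: "F \<subseteq> (\<Union>m. G e m)" if e: "e > 0" for e
  proof
    fix \<omega> assume "\<omega> \<in> F"
    then obtain t where om: "\<omega> \<in> space M" and t: "a \<le> t" "t < a + r" and Bt: "\<bar>B t \<omega>\<bar> \<le> t powr \<gamma>"
      by (auto simp: F_def)
    have tpos: "t > 0" using t a by simp
    have "t powr \<gamma> \<le> (2^n) powr \<gamma>" using t arn tpos g0 by (intro powr_mono2) auto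
    also have "(2^n :: real) powr \<gamma> = c"
      by (simp add: c_def powr_realpow[symmetric] powr_powr)
    finally have Btc: "\<bar>B t \<omega>\<bar> \<le> c" using Bt by simp
    have "\<forall>x\<in>{0..}. \<forall>e>0. \<exists>d>0. \<forall>x'\<in>{0..}. dist x' x < d \<longrightarrow> dist (B x' \<omega>) (B x \<omega>) < e"
      using Bc[OF om] unfolding continuous_on_iff .
    then have "\<exists>d>0. \<forall>x'\<in>{0..}. dist x' t < d \<longrightarrow> dist (B x' \<omega>) (B t \<omega>) < e"
      using tpos e by simp
    then obtain \<delta> where \<delta>: "\<delta> > 0" and cont: "\<And>x'. x' \<in> {0..} \<Longrightarrow> dist x' t < \<delta> \<Longrightarrow> dist (B x' \<omega>) (B t \<omega>) < e"
      by blast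
    obtain m where m: "r / \<delta> < 2 ^ m" using real_arch_pow[of 2 "r / \<delta>"] by auto
    have mesh: "r / 2^m < \<delta>" using m \<delta> by (simp add: field_simps)
    define q where "q = (t - a) * 2^m / r"
    have q0: "0 \<le> q" using t r by (simp add: q_def)
    have qlt: "q < 2^m"
    proof -
      have "(t - a) / r < 1" using t r by simp
      then have "(t - a) / r * 2^m < 1 * 2^m" by (intro mult_strict_right_mono) auto
      then show ?thesis by (simp add: q_def)
    qed
    define k where "k = nat \<lfloor>q\<rfloor>"
    have kq: "real k \<le> q" "q < real k + 1" using q0
      by (simp_all add: k_def)
    have "real k < (2::real)^m" using kq qlt by linarith
    then have k2: "k \<le> 2^m" using of_nat_less_numeral_power_cancel_iff by (metis less_imp_le)
    have "real k * r / 2^m \<le> t - a" using kq r by (simp add: q_def field_simps)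
    then have sk_le: "s m k \<le> t" by (simp add: s_def)
    have "t - a < (real k + 1) * r / 2^m" using kq r by (simp add: q_def field_simps)
    moreover have "(real k + 1) * r / 2^m = real k * r / 2^m + r / 2^m" by (simp add: field_simps)
    ultimately have "t - s m k < r / 2^m" unfolding s_def by linarith
    then have "dist (s m k) t < \<delta>" using sk_le mesh by (simp add: dist_real_def)
    then have "dist (B (s m k) \<omega>) (B t \<omega>) < e" using cont s_pos[of m k] by simp
    then have "\<bar>B (s m k) \<omega>\<bar> \<le> c + e" using Btc by (simp add: dist_real_def)
    then show "\<omega> \<in> (\<Union>m. G e m)" using om k2 by (auto simp: G_def)
  qed
  have Fe: "prob F \<le> (2 * (c + e) + 4 * sqrt r) / sqrt (2 * pi * a)" if e: "e > 0" for e
  proof -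
    have U: "(\<Union>m. G e m) \<in> events" using Gm by blast
    have "prob F \<le> prob (\<Union>m. G e m)" by (rule finite_measure_mono[OF cover[OF e] U])
    also have "prob (\<Union>m. G e m) \<le> (2 * (c + e) + 4 * sqrt r) / sqrt (2 * pi * a)"
      by (rule LIMSEQ_le_const2[OF finite_Lim_measure_incseq]) (use Gm Ginc Gbound e in auto)
    finally show ?thesis .
  qed
  have "prob F \<le> (2 * c + 4 * sqrt r) / sqrt (2 * pi * a)"
  proof (rule field_le_epsilon)
    fix \<epsilon> :: real assume \<epsilon>: "\<epsilon> > 0"
    have sp: "sqrt (2 * pi * a) > 0" using a by simp
    define e where "e = \<epsilon> * sqrt (2 * pi * a) / 2"
    have e: "e > 0" using \<epsilon> sp by (simp add: e_def)
    have "(2 * (c + e) + 4 * sqrt r) / sqrt (2 * pi * a) = (2 * c + 4 * sqrt r) / sqrt (2 * pi * a) + \<epsilon>"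
    proof -
      have "2 * (c + e) + 4 * sqrt r = (2 * c + 4 * sqrt r) + 2 * e" by (simp add: algebra_simps)
      then have "(2 * (c + e) + 4 * sqrt r) / sqrt (2 * pi * a) = (2 * c + 4 * sqrt r) / sqrt (2 * pi * a) + 2 * e / sqrt (2 * pi * a)"
        by (simp only: add_divide_distrib)
      moreover have "2 * e / sqrt (2 * pi * a) = \<epsilon>" using sp a by (simp add: e_def)
      ultimately show ?thesis by simp
    qed
    then show "prob F \<le> (2 * c + 4 * sqrt r) / sqrt (2 * pi * a) + \<epsilon>" using Fe[OF e] by simp
  qed
  also have "\<dots> \<le> 2 / sqrt pi * 2 powr (real n * (\<gamma> - 1/2)) + 4 / sqrt (2 * pi) * (r / a) powr (1/2)"
    unfolding c_def by (rule final_arith[OF n a r an])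
  finally show ?thesis by (simp add: F_def)
qed

end
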